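(* Let $D$ be an oriented link (or tangle) diagram with a shaping $\{\chi_i=(a_i,b_i,m_i)\}$, and let $c$ be a crossing of $D$, with segments labeled $1,2,1',2'$ as described in the context. If one of the relations \[ b_{2'}=b_1,\qquad b_2=m_1b_1,\qquad m_2b_2=m_1b_{1'},\qquad m_2b_{2'}=b_{1'} \] holds, then all four of them hold. In this case (the crossing is called pinched) the four quantities $b_{2'}/b_1$, $m_1b_1/b_2$, $m_2b_2/(m_1b_{1'})$, $b_{1'}/(m_2b_{2'})$ all equal $1$.
   Context: A shape is a triple $\chi=(a,b,m)$ of nonzero complex numbers. The segments of an oriented diagram are the edges of its underlying $4$-valent planar graph. At a crossing, rotate the picture so that both strands point to the right; label the incoming upper-left segment $1$, the incoming lower-left segment $2$, the outgoing lower-right segment $1'$ (the continuation of segment $1$), and the outgoing upper-right segment $2'$ (the continuation of segment $2$). Each crossing has a sign $\epsilon=\pm1$. A shaping assigns a shape $\chi_i=(a_i,b_i,m_i)$ to each segment so that at every crossing $m_{1'}=m_1$, $m_{2'}=m_2$, all components of $\chi_{1'},\chi_{2'}$ are finite and nonzero, and: at a positive crossing \[ A=1-\frac{m_1b_1}{b_2}\Big(1-\frac{a_1}{m_1}\Big)\Big(1-\frac{1}{m_2a_2}\Big),\quad a_{1'}=a_1A^{-1},\quad a_{2'}=a_2A, \] \[ b_{1'}=\frac{m_2b_2}{m_1}\Big(1-m_2a_2\big(1-\tfrac{b_2}{m_1b_1}\big)\Big)^{-1},\qquad b_{2'}=b_1\Big(1-\frac{m_1}{a_1}\big(1-\tfrac{b_2}{m_1b_1}\big)\Big);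 \] and at a negative crossing \[ \tilde A=1-\frac{b_2}{m_1b_1}(1-m_1a_1)\Big(1-\frac{m_2}{a_2}\Big),\quad a_{1'}=a_1\tilde A^{-1},\quad a_{2'}=a_2\tilde A, \] \[ b_{1'}=\frac{m_2b_2}{m_1}\Big(1-\frac{a_2}{m_2}\big(1-\tfrac{m_1b_1}{b_2}\big)\Big),\qquad b_{2'}=b_1\Big(1-\frac{1}{m_1a_1}\big(1-\tfrac{m_1b_1}{b_2}\big)\Big)^{-1}. \] *)

theory Defs
  imports Complex_Main
begin

type_synonym shape = "complex \<times> complex \<times> complex"

definition sh_a :: "shape \<Rightarrow> complex" where "sh_a \<chi> = fst \<chi>"
definition sh_b :: "shape \<Rightarrow> complex" where "sh_b \<chi> = fst (snd \<chi>)"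
definition sh_m :: "shape \<Rightarrow> complex" where "sh_m \<chi> = snd (snd \<chi>)"

definition is_shape :: "shape \<Rightarrow> bool" where
  "is_shape \<chi> \<longleftrightarrow> sh_a \<chi> \<noteq> 0 \<and> sh_b \<chi> \<noteq> 0 \<and> sh_m \<chi> \<noteq> 0"

text \<open>The shaping relations at a crossing of sign eps, with incoming segments
  1 (upper-left), 2 (lower-left) and outgoing segments 1' (lower-right,
  continuation of 1), 2' (upper-right, continuation of 2).  All four shapes are
  genuine shapes (nonzero components); the denominators appearing in the
  formulas are required to be nonzero so that all components are finite.\<close>
definition crossing_shaped ::
  "int \<Rightarrow> shape \<Rightarrow> shape \<Rightarrow> shape \<Rightarrow> shape \<Rightarrow> bool" where
  "crossing_shaped eps \<chi>1 \<chi>2 \<chi>1' \<chi>2' \<longleftrightarrow>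
     (let a1 = sh_a \<chi>1; b1 = sh_b \<chi>1; m1 = sh_m \<chi>1;
          a2 = sh_a \<chi>2; b2 = sh_b \<chi>2; m2 = sh_m \<chi>2;
          a1' = sh_a \<chi>1'; b1' = sh_b \<chi>1'; m1' = sh_m \<chi>1';
          a2' = sh_a \<chi>2'; b2' = sh_b \<chi>2'; m2' = sh_m \<chi>2'
      in is_shape \<chi>1 \<and> is_shape \<chi>2 \<and> is_shape \<chi>1' \<and> is_shape \<chi>2' \<and>
         m1' = m1 \<and> m2' = m2 \<and>
         (if eps = 1 then
            (let A = 1 - (m1 * b1 / b2) * (1 - a1 / m1) * (1 - 1 / (m2 * a2));
                 D1 = 1 - m2 * a2 * (1 - b2 / (m1 * b1))
             in A \<noteq> 0 \<and> D1 \<noteq> 0 \<and>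
                a1' = a1 / A \<and> a2' = a2 * A \<and>
                b1' = (m2 * b2 / m1) / D1 \<and>
                b2' = b1 * (1 - (m1 / a1) * (1 - b2 / (m1 * b1))))
          else
            (let A = 1 - (b2 / (m1 * b1)) * (1 - m1 * a1) * (1 - m2 / a2);
                 D2 = 1 - (1 / (m1 * a1)) * (1 - m1 * b1 / b2)
             in A \<noteq> 0 \<and> D2 \<noteq> 0 \<and>
                a1' = a1 / A \<and> a2' = a2 * A \<and>
                b1' = (m2 * b2 / m1) * (1 - (a2 / m2) * (1 - m1 * b1 / b2)) \<and>
                b2' = b1 / D2)))"

end

theory Submission imports Defs begin
lemma pos_case:
  fixes a1 b1 m1 a2 b2 m2 b1' b2' :: complex
  assumes nz: "a1 \<noteq> 0" "b1 \<noteq> 0" "m1 \<noteq> 0" "a2 \<noteq> 0" "b2 \<noteq> 0" "m2 \<noteq> 0"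
  and A: "1 - (m1 * b1 / b2) * (1 - a1 / m1) * (1 - 1 / (m2 * a2)) \<noteq> 0"
  and D: "1 - m2 * a2 * (1 - b2 / (m1 * b1)) \<noteq> 0"
  and e1: "b1' = (m2 * b2 / m1) / (1 - m2 * a2 * (1 - b2 / (m1 * b1)))"
  and e2: "b2' = b1 * (1 - (m1 / a1) * (1 - b2 / (m1 * b1)))"
  and h: "b2' = b1 \<or> b2 = m1 * b1 \<or> m2 * b2 = m1 * b1' \<or> m2 * b2' = b1'"
  shows "b2 = m1 * b1"
proof -
  define p where "p = m1 / a1"
  define q where "q = m2 * a2"
  define y where "y = 1 - b2 / (m1 * b1)"
  have p0: "p \<noteq> 0" and q0: "q \<noteq> 0" using nz by (auto simp: p_def q_def)
  have b2e: "b2 = m1 * b1 * (1 - y)" using nz by (simp add: y_def field_simps)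
  have x0: "1 - y \<noteq> 0" using nz b2e by auto
  have D': "1 - q * y \<noteq> 0" using D by (simp add: q_def y_def)
  have e1': "b1' = m2 * b1 * (1 - y) / (1 - q * y)" using e1 nz b2e by (simp add: q_def y_def[symmetric])
  have e2': "b2' = b1 * (1 - p * y)" using e2 by (simp add: p_def y_def)
  have A': "(1 - y) * p * q - (p - 1) * (q - 1) \<noteq> 0"
  proof
    assume z: "(1 - y) * p * q - (p - 1) * (q - 1) = 0"
    have "1 - (m1 * b1 / b2) * (1 - a1 / m1) * (1 - 1 / (m2 * a2))
        = ((1 - y) * p * q - (p - 1) * (q - 1)) / ((1 - y) * p * q)"
    proof -
      have r: "m1 * b1 / b2 = 1 / (1 - y)" using nz x0 b2e by simp
      have r2: "1 - a1 / m1 = (p - 1) / p" using nz unfolding p_def by (simp add: field_simps)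
      have r3: "1 - 1 / (m2 * a2) = (q - 1) / q" using nz unfolding q_def by (simp add: field_simps)
      have "1 - (m1 * b1 / b2) * (1 - a1 / m1) * (1 - 1 / (m2 * a2))
          = 1 - (1 / (1 - y)) * ((p - 1) / p) * ((q - 1) / q)" by (simp only: r r2 r3)
      also have "\<dots> = ((1 - y) * p * q - (p - 1) * (q - 1)) / ((1 - y) * p * q)"
        using x0 p0 q0 by (simp add: field_simps)
      finally show ?thesis .
    qed
    with z A show False by simp
  qed
  have "y = 0"
  proof -
    consider "b2' = b1" | "b2 = m1 * b1" | "m2 * b2 = m1 * b1'" | "m2 * b2' = b1'" using h by blast
    then show ?thesis
    proof cases
      case 1 then show ?thesis using e2' nz p0 by simp
    next
      case 2 then show ?thesis using b2e nz by simp
    next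
      case 3
      hence "m2 * (m1 * b1 * (1 - y)) = m1 * (m2 * b1 * (1 - y) / (1 - q * y))" using b2e e1' by simp
      hence "(1 - q*y) = 1" using nz x0 D' by (simp add: field_simps)
      then show ?thesis using q0 by simp
    next
      case 4
      hence "m2 * (b1 * (1 - p * y)) = m2 * b1 * (1 - y) / (1 - q * y)" using e1' e2' by simp
      hence "(b1 * m2) * ((1 - p*y) * (1 - q*y)) = (b1 * m2) * (1 - y)" using nz D' by (simp add: field_simps)
      hence "(1 - p*y) * (1 - q*y) = 1 - y" using nz by (subst (asm) mult_left_cancel) auto
      hence "y * ((1 - y) * p * q - (p - 1) * (q - 1)) = 0" by (simp add: algebra_simps)  
      then show ?thesis using A' by simp
    qed
  qed
  then show ?thesis using b2e by simp
qed

lemma neg_case: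
  fixes a1 b1 m1 a2 b2 m2 b1' b2' :: complex
  assumes nz: "a1 \<noteq> 0" "b1 \<noteq> 0" "m1 \<noteq> 0" "a2 \<noteq> 0" "b2 \<noteq> 0" "m2 \<noteq> 0"
  and A: "1 - (b2 / (m1 * b1)) * (1 - m1 * a1) * (1 - m2 / a2) \<noteq> 0"
  and D: "1 - (1 / (m1 * a1)) * (1 - m1 * b1 / b2) \<noteq> 0"
  and e1: "b1' = (m2 * b2 / m1) * (1 - (a2 / m2) * (1 - m1 * b1 / b2))"
  and e2: "b2' = b1 / (1 - (1 / (m1 * a1)) * (1 - m1 * b1 / b2))"
  and h: "b2' = b1 \<or> b2 = m1 * b1 \<or> m2 * b2 = m1 * b1' \<or> m2 * b2' = b1'"
  shows "b2 = m1 * b1"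
proof -
  define p where "p = 1 / (m1 * a1)"
  define q where "q = a2 / m2"
  define y where "y = 1 - m1 * b1 / b2"
  have p0: "p \<noteq> 0" and q0: "q \<noteq> 0" using nz by (auto simp: p_def q_def)
  have b1e: "m1 * b1 = b2 * (1 - y)" using nz by (simp add: y_def field_simps)
  have x0: "1 - y \<noteq> 0" using nz b1e by auto
  have D': "1 - p * y \<noteq> 0" using D by (simp add: p_def y_def)
  have e1': "b1' = (m2 * b2 / m1) * (1 - q * y)" using e1 by (simp add: q_def y_def)
  have e2': "b2' = b1 / (1 - p * y)" using e2 by (simp add: p_def y_def)
  have A': "(1 - y) * p * q - (p - 1) * (q - 1) \<noteq> 0"
  proof
    assume z: "(1 - y) * p * q - (p - 1) * (q - 1) = 0"
    have "1 - (b2 / (m1 * b1)) * (1 - m1 * a1) * (1 - m2 / a2)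
        = ((1 - y) * p * q - (p - 1) * (q - 1)) / ((1 - y) * p * q)"
    proof -
      have r: "b2 / (m1 * b1) = 1 / (1 - y)" using nz x0 b1e by simp
      have r2: "1 - m1 * a1 = (p - 1) / p" using nz unfolding p_def by (simp add: field_simps)
      have r3: "1 - m2 / a2 = (q - 1) / q" using nz unfolding q_def by (simp add: field_simps)
      have "1 - (b2 / (m1 * b1)) * (1 - m1 * a1) * (1 - m2 / a2)
          = 1 - (1 / (1 - y)) * ((p - 1) / p) * ((q - 1) / q)" by (simp only: r r2 r3)
      also have "\<dots> = ((1 - y) * p * q - (p - 1) * (q - 1)) / ((1 - y) * p * q)"
        using x0 p0 q0 by (simp add: field_simps)
      finally show ?thesis .
    qed
    with z A show False by simp
  qed
  have "y = 0"
  proof -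
    consider "b2' = b1" | "b2 = m1 * b1" | "m2 * b2 = m1 * b1'" | "m2 * b2' = b1'" using h by blast
    then show ?thesis
    proof cases
      case 1
      hence "1 - p * y = 1" using e2' nz D' by (simp add: field_simps)
      then show ?thesis using p0 by simp
    next
      case 2 then show ?thesis using b1e nz by simp
    next
      case 3
      hence "(m2 * b2) * 1 = (m2 * b2) * (1 - q * y)" using e1' nz by (simp add: field_simps)
      hence "1 - q*y = 1" using nz by (subst (asm) mult_left_cancel) auto
      then show ?thesis using q0 by simp
    next
      case 4
      hence "m2 * b1 / (1 - p * y) = (m2 * b2 / m1) * (1 - q * y)" using e1' e2' by simp
      hence "m1 * b1 * m2 = (1 - p * y) * (1 - q * y) * m2 * b2" using nz D' by (simp add: field_simps)
      hence "b2 * (1 - y) * m2 = (1 - p * y) * (1 - q * y) * m2 * b2" by (simp only: b1e)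
      hence "(b2 * m2) * (1 - y) = (b2 * m2) * ((1 - p*y) * (1 - q*y))" by (simp add: algebra_simps)
      hence "(1 - p*y) * (1 - q*y) = 1 - y" using nz by (subst (asm) mult_left_cancel) auto
      hence "y * ((1 - y) * p * q - (p - 1) * (q - 1)) = 0" by (simp add: algebra_simps)
      then show ?thesis using A' by simp
    qed
  qed
  then show ?thesis using b1e by simp
qed


theorem proposition2p15:
  fixes eps :: int and \<chi>1 \<chi>2 \<chi>1' \<chi>2' :: shape
  assumes "eps = 1 \<or> eps = -1"
    and "crossing_shaped eps \<chi>1 \<chi>2 \<chi>1' \<chi>2'"
    and "sh_b \<chi>2' = sh_b \<chi>1
         \<or> sh_b \<chi>2 = sh_m \<chi>1 * sh_b \<chi>1
         \<or> sh_m \<chi>2 * sh_b \<chi>2 = sh_m \<chi>1 * sh_b \<chi>1'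
         \<or> sh_m \<chi>2 * sh_b \<chi>2' = sh_b \<chi>1'"
  shows "sh_b \<chi>2' = sh_b \<chi>1
         \<and> sh_b \<chi>2 = sh_m \<chi>1 * sh_b \<chi>1
         \<and> sh_m \<chi>2 * sh_b \<chi>2 = sh_m \<chi>1 * sh_b \<chi>1'
         \<and> sh_m \<chi>2 * sh_b \<chi>2' = sh_b \<chi>1'
         \<and> sh_b \<chi>2' / sh_b \<chi>1 = 1
         \<and> sh_m \<chi>1 * sh_b \<chi>1 / sh_b \<chi>2 = 1
         \<and> sh_m \<chi>2 * sh_b \<chi>2 / (sh_m \<chi>1 * sh_b \<chi>1') = 1
         \<and> sh_b \<chi>1' / (sh_m \<chi>2 * sh_b \<chi>2') = 1"
proof -
  define a1 b1 m1 a2 b2 m2 b1' b2' where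
    "a1 = sh_a \<chi>1" "b1 = sh_b \<chi>1" "m1 = sh_m \<chi>1"
    "a2 = sh_a \<chi>2" "b2 = sh_b \<chi>2" "m2 = sh_m \<chi>2"
    "b1' = sh_b \<chi>1'" "b2' = sh_b \<chi>2'"
  have cs: "crossing_shaped eps \<chi>1 \<chi>2 \<chi>1' \<chi>2'" by fact
  have nz: "a1 \<noteq> 0" "b1 \<noteq> 0" "m1 \<noteq> 0" "a2 \<noteq> 0" "b2 \<noteq> 0" "m2 \<noteq> 0"
    "b1' \<noteq> 0" "b2' \<noteq> 0"
    using cs unfolding crossing_shaped_def Let_def is_shape_def a1_b1_m1_a2_b2_m2_b1'_b2'_def
    by auto
  have h: "b2' = b1 \<or> b2 = m1 * b1 \<or> m2 * b2 = m1 * b1' \<or> m2 * b2' = b1'"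
    using assms(3) unfolding a1_b1_m1_a2_b2_m2_b1'_b2'_def .
  have main: "b2' = b1 \<and> b2 = m1 * b1 \<and> m2 * b2 = m1 * b1' \<and> m2 * b2' = b1'"
  proof (cases "eps = 1")
    case True
    have A: "1 - (m1 * b1 / b2) * (1 - a1 / m1) * (1 - 1 / (m2 * a2)) \<noteq> 0"
      and D: "1 - m2 * a2 * (1 - b2 / (m1 * b1)) \<noteq> 0"
      and e1: "b1' = (m2 * b2 / m1) / (1 - m2 * a2 * (1 - b2 / (m1 * b1)))"
      and e2: "b2' = b1 * (1 - (m1 / a1) * (1 - b2 / (m1 * b1)))"
      using cs True unfolding crossing_shaped_def Let_def a1_b1_m1_a2_b2_m2_b1'_b2'_def
      by auto
    have k: "b2 = m1 * b1" using pos_case[OF nz(1-6) A D e1 e2 h] .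
    have "b2 / (m1 * b1) = 1" using k nz by simp
    then have "b1' = m2 * b2 / m1" and "b2' = b1" using e1 e2 by simp_all
    then show ?thesis using k nz by (simp add: field_simps)
  next
    case False
    have A: "1 - (b2 / (m1 * b1)) * (1 - m1 * a1) * (1 - m2 / a2) \<noteq> 0"
      and D: "1 - (1 / (m1 * a1)) * (1 - m1 * b1 / b2) \<noteq> 0"
      and e1: "b1' = (m2 * b2 / m1) * (1 - (a2 / m2) * (1 - m1 * b1 / b2))"
      and e2: "b2' = b1 / (1 - (1 / (m1 * a1)) * (1 - m1 * b1 / b2))"
      using cs False unfolding crossing_shaped_def Let_def a1_b1_m1_a2_b2_m2_b1'_b2'_def
      by auto
    have k: "b2 = m1 * b1" using neg_case[OF nz(1-6) A D e1 e2 h] .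
    have "m1 * b1 / b2 = 1" using k nz by simp
    then have "b1' = m2 * b2 / m1" and "b2' = b1" using e1 e2 by simp_all
    then show ?thesis using k nz by (simp add: field_simps)
  qed
  have "b2' / b1 = 1 \<and> m1 * b1 / b2 = 1 \<and> m2 * b2 / (m1 * b1') = 1 \<and> b1' / (m2 * b2') = 1"
  proof -
    have x: "b1' = m2 * b1" and y: "b2' = b1" and z: "b2 = m1 * b1" using main by auto
    show ?thesis unfolding x y z using nz by simp
  qed
  with main show ?thesis unfolding a1_b1_m1_a2_b2_m2_b1'_b2'_def by blast
qed

end
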